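(* Let $p\in\Delta_n$ be a probability distribution on $\{1,\dots,n\}$ and let $\rho>0$ satisfy $\|p\|_2\le\sqrt2\,\rho$. Let $Q$ be a positive integer such that $$3\left[2^{7/4}Q^{-1/2}\rho^{3/2}+2Q^{-1}\rho\right]\le\tfrac13\rho^2 .$$ Let $\xi,\xi'$ be the empirical distributions of two disjoint (consecutive) segments, of cardinality $Q$ each, of an i.i.d. sample drawn from $p$. Then $$\mathbb P\left\{\left|\xi^T\xi'-\|p\|_2^2\right|>\tfrac13\rho^2\right\}\le\tfrac13 .$$
   Context: $\Delta_n=\{r\in\mathbb{R}^n:r\ge0,\sum_ir_i=1\}$. The empirical distribution of a set of observations with values in $\{1,\dots,n\}$ is the vector whose $i$-th entry is the fraction of observations equal to $i$. *)

theory Defs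
  imports "HOL-Probability.Probability"
begin

definition empirical :: "(nat \<Rightarrow> 'a) \<Rightarrow> nat set \<Rightarrow> 'a \<Rightarrow> real" where
  "empirical x S i = real (card {k \<in> S. x k = i}) / real (card S)"

definition iid_sample :: "nat \<Rightarrow> 'a pmf \<Rightarrow> (nat \<Rightarrow> 'a) pmf" where
  "iid_sample m P = Pi_pmf {..<m} undefined (\<lambda>_. P)"

end

theory Submission
  imports Defs
begin

lemma fin_iid: "finite (set_pmf (iid_sample m (P::'a::finite pmf)))"
  unfolding iid_sample_def by (auto simp: set_Pi_pmf intro!: finite_PiE_dflt)

lemma int_iid: "integrable (measure_pmf (iid_sample m (P::'a::finite pmf))) (f :: _ \<Rightarrow> real)"
  by (rule integrable_measure_pmf_finite[OF fin_iid])

lemma prodexp: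
  fixes P :: "'a::finite pmf" and g :: "nat \<Rightarrow> 'a \<Rightarrow> real"
  assumes "J \<subseteq> {..<m}" "\<And>t y. g t y \<ge> 0"
  shows "measure_pmf.expectation (iid_sample m P) (\<lambda>x. \<Prod>t\<in>J. g t (x t))
        = (\<Prod>t\<in>J. measure_pmf.expectation P (g t))"
proof -
  define f where "f t y = (if t \<in> J then g t y else 1)" for t y
  have "measure_pmf.expectation (Pi_pmf {..<m} undefined (\<lambda>_. P)) (\<lambda>x. \<Prod>t\<in>{..<m}. f t (x t))
     = (\<Prod>t\<in>{..<m}. measure_pmf.expectation P (f t))"
    by (rule expectation_prod_Pi_pmf) (auto simp: f_def assms integrable_measure_pmf_finite)
  moreover have "(\<lambda>x. \<Prod>t\<in>{..<m}. f t (x t)) = (\<lambda>x. \<Prod>t\<in>J. g t (x t))"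
  proof
    fix x
    have "(\<Prod>t\<in>{..<m}. f t (x t)) = (\<Prod>t\<in>{..<m} \<inter> J. g t (x t))"
      unfolding f_def by (subst prod.inter_restrict) auto
    also have "{..<m} \<inter> J = J" using assms by auto
    finally show "(\<Prod>t\<in>{..<m}. f t (x t)) = (\<Prod>t\<in>J. g t (x t))" .
  qed
  moreover have "(\<Prod>t\<in>{..<m}. measure_pmf.expectation P (f t)) = (\<Prod>t\<in>J. measure_pmf.expectation P (g t))"
  proof -
    have "(\<Prod>t\<in>{..<m}. measure_pmf.expectation P (f t)) = (\<Prod>t\<in>{..<m}. if t \<in> J then measure_pmf.expectation P (g t) else 1)"
      by (intro prod.cong) (auto simp: f_def[abs_def])
    also have "\<dots> = (\<Prod>t\<in>{..<m} \<inter> J. measure_pmf.expectation P (g t))"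
      by (subst prod.inter_restrict) auto
    also have "{..<m} \<inter> J = J" using assms by auto
    finally show ?thesis .
  qed
  ultimately show ?thesis unfolding iid_sample_def by simp
qed

lemma exp_ind: "measure_pmf.expectation P (\<lambda>y. if y = i then 1 else 0 :: real) = pmf P i"
proof -
  have "(\<lambda>y. if y = i then 1 else 0 :: real) = indicator {i}" by (auto simp: indicator_def)
  then show ?thesis by (simp add: measure_pmf_single)
qed

lemma exp_pow:
  fixes P :: "'a::finite pmf"
  assumes "J \<subseteq> {..<m}" "finite J"
  shows "measure_pmf.expectation (iid_sample m P) (\<lambda>x. \<Prod>t\<in>J. if x t = i then 1 else 0)
        = pmf P i ^ card J"
  using prodexp[OF assms(1), of "\<lambda>t y. if y = i then 1 else 0" P] by (simp add: exp_ind)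

lemma exp_pow2:
  fixes P :: "'a::finite pmf"
  assumes "J1 \<subseteq> {..<m}" "J2 \<subseteq> {..<m}" "J1 \<inter> J2 = {}"
  shows "measure_pmf.expectation (iid_sample m P) (\<lambda>x. (\<Prod>t\<in>J1. if x t = i then 1 else 0) * (\<Prod>t\<in>J2. if x t = j then 1 else 0))
        = pmf P i ^ card J1 * pmf P j ^ card J2"
proof -
  define g where "g t y = (if t \<in> J1 then (if y = i then 1 else 0) else (if y = j then 1 else 0 :: real))" for t y
  have fin: "finite J1" "finite J2" using assms finite_subset[of _ "{..<m}"] by auto
  have "measure_pmf.expectation (iid_sample m P) (\<lambda>x. \<Prod>t\<in>J1 \<union> J2. g t (x t)) = (\<Prod>t\<in>J1 \<union> J2. measure_pmf.expectation P (g t))"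
    by (rule prodexp) (use assms in \<open>auto simp: g_def\<close>)
  moreover have "(\<lambda>x. \<Prod>t\<in>J1 \<union> J2. g t (x t)) = (\<lambda>x. (\<Prod>t\<in>J1. if x t = i then 1 else 0) * (\<Prod>t\<in>J2. if x t = j then 1 else 0))"
  proof
    fix x
    show "(\<Prod>t\<in>J1 \<union> J2. g t (x t)) = (\<Prod>t\<in>J1. if x t = i then 1 else 0) * (\<Prod>t\<in>J2. if x t = j then 1 else 0)"
      using assms fin by (subst prod.union_disjoint) (auto simp: g_def intro!: arg_cong2[where f="(*)"] prod.cong)
  qed
  moreover have "(\<Prod>t\<in>J1 \<union> J2. measure_pmf.expectation P (g t)) = pmf P i ^ card J1 * pmf P j ^ card J2"
  proof -
    have "(\<Prod>t\<in>J1. measure_pmf.expectation P (g t)) = (\<Prod>t\<in>J1. pmf P i)"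
      by (intro prod.cong refl) (simp add: g_def[abs_def] exp_ind)
    moreover have "(\<Prod>t\<in>J2. measure_pmf.expectation P (g t)) = (\<Prod>t\<in>J2. pmf P j)"
    proof (intro prod.cong refl)
      fix t assume "t \<in> J2"
      then have "t \<notin> J1" using assms by auto
      then show "measure_pmf.expectation P (g t) = pmf P j" by (simp add: g_def[abs_def] exp_ind)
    qed
    ultimately show ?thesis using assms fin by (subst prod.union_disjoint) auto
  qed
  ultimately show ?thesis by simp
qed

definition ee :: "nat \<Rightarrow> nat \<Rightarrow> (nat \<Rightarrow> 'a) \<Rightarrow> real" where
  "ee k l x = (if x k = x l then 1 else 0)"

lemma pt2:
  fixes x :: "nat \<Rightarrow> 'a::finite"
  assumes "k \<noteq> l"
  shows "ee k l x = (\<Sum>i\<in>UNIV. \<Prod>t\<in>{k,l}. if x t = i then 1 else 0)"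
proof -
  have "(\<Sum>i\<in>UNIV. \<Prod>t\<in>{k,l}. if x t = i then 1 else (0::real)) = (\<Sum>i\<in>UNIV. if i = x k then (if x l = x k then 1 else 0) else 0)"
    using assms by (intro sum.cong) auto
  also have "\<dots> = ee k l x" by (simp add: ee_def)
  finally show ?thesis by simp
qed

lemma pt3:
  fixes x :: "nat \<Rightarrow> 'a::finite"
  assumes "k \<noteq> l" "k \<noteq> l'" "l \<noteq> l'"
  shows "ee k l x * ee k l' x = (\<Sum>i\<in>UNIV. \<Prod>t\<in>{k,l,l'}. if x t = i then 1 else 0)"
proof -
  have "(\<Sum>i\<in>UNIV. \<Prod>t\<in>{k,l,l'}. if x t = i then 1 else (0::real)) = (\<Sum>i\<in>UNIV. if i = x k then (if x l = x k \<and> x l' = x k then 1 else 0) else 0)"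
    using assms by (intro sum.cong) auto
  also have "\<dots> = ee k l x * ee k l' x" by (simp add: ee_def)
  finally show ?thesis by simp
qed

lemma Eee:
  fixes P :: "'a::finite pmf"
  assumes "k \<noteq> l" "k < m" "l < m"
  shows "measure_pmf.expectation (iid_sample m P) (ee k l) = (\<Sum>i\<in>UNIV. pmf P i ^ 2)"
proof -
  have "measure_pmf.expectation (iid_sample m P) (ee k l) =
    measure_pmf.expectation (iid_sample m P) (\<lambda>x. \<Sum>i\<in>UNIV. \<Prod>t\<in>{k,l}. if x t = i then 1 else 0)"
    by (intro arg_cong[where f = "measure_pmf.expectation (iid_sample m P)"] ext pt2 assms)
  also have "\<dots> = (\<Sum>i\<in>UNIV. measure_pmf.expectation (iid_sample m P) (\<lambda>x. \<Prod>t\<in>{k,l}. if x t = i then 1 else 0))"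
    by (rule Bochner_Integration.integral_sum) (rule int_iid)
  also have "\<dots> = (\<Sum>i\<in>UNIV. pmf P i ^ 2)"
    using assms by (intro sum.cong refl, subst exp_pow) (auto simp: eval_nat_numeral)
  finally show ?thesis .
qed

lemma Eee3:
  fixes P :: "'a::finite pmf"
  assumes "k \<noteq> l" "k \<noteq> l'" "l \<noteq> l'" "k < m" "l < m" "l' < m"
  shows "measure_pmf.expectation (iid_sample m P) (\<lambda>x. ee k l x * ee k l' x) = (\<Sum>i\<in>UNIV. pmf P i ^ 3)"
proof -
  have "measure_pmf.expectation (iid_sample m P) (\<lambda>x. ee k l x * ee k l' x) =
    measure_pmf.expectation (iid_sample m P) (\<lambda>x. \<Sum>i\<in>UNIV. \<Prod>t\<in>{k,l,l'}. if x t = i then 1 else 0)"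
    by (intro arg_cong[where f = "measure_pmf.expectation (iid_sample m P)"] ext pt3 assms)
  also have "\<dots> = (\<Sum>i\<in>UNIV. measure_pmf.expectation (iid_sample m P) (\<lambda>x. \<Prod>t\<in>{k,l,l'}. if x t = i then 1 else 0))"
    by (rule Bochner_Integration.integral_sum) (rule int_iid)
  also have "\<dots> = (\<Sum>i\<in>UNIV. pmf P i ^ 3)"
    using assms by (intro sum.cong refl, subst exp_pow) (auto simp: eval_nat_numeral)
  finally show ?thesis .
qed

lemma Eee4:
  fixes P :: "'a::finite pmf"
  assumes "distinct [k,l,k',l']" "k < m" "l < m" "k' < m" "l' < m"
  shows "measure_pmf.expectation (iid_sample m P) (\<lambda>x. ee k l x * ee k' l' x) = (\<Sum>i\<in>UNIV. pmf P i ^ 2)^2"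
proof -
  have "measure_pmf.expectation (iid_sample m P) (\<lambda>x. ee k l x * ee k' l' x) =
    measure_pmf.expectation (iid_sample m P) (\<lambda>x. \<Sum>i\<in>UNIV. \<Sum>j\<in>UNIV. (\<Prod>t\<in>{k,l}. if x t = i then 1 else 0) * (\<Prod>t\<in>{k',l'}. if x t = j then 1 else 0))"
  proof (intro arg_cong[where f = "measure_pmf.expectation (iid_sample m P)"] ext)
    fix x :: "nat \<Rightarrow> 'a"
    have kl: "k \<noteq> l" "k' \<noteq> l'" using assms(1) by auto
    show "ee k l x * ee k' l' x = (\<Sum>i\<in>UNIV. \<Sum>j\<in>UNIV. (\<Prod>t\<in>{k,l}. if x t = i then 1 else 0) * (\<Prod>t\<in>{k',l'}. if x t = j then 1 else 0))"
      unfolding pt2[OF kl(1)] pt2[OF kl(2)] by (rule sum_product)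
  qed
  also have "\<dots> = (\<Sum>i\<in>UNIV. \<Sum>j\<in>UNIV. measure_pmf.expectation (iid_sample m P) (\<lambda>x. (\<Prod>t\<in>{k,l}. if x t = i then 1 else 0) * (\<Prod>t\<in>{k',l'}. if x t = j then 1 else 0)))"
    by (simp add: Bochner_Integration.integral_sum int_iid)
  also have "\<dots> = (\<Sum>i\<in>UNIV. \<Sum>j\<in>UNIV. pmf P i ^ 2 * pmf P j ^ 2)"
    using assms by (intro sum.cong refl, subst exp_pow2) (auto simp: power2_eq_square)
  also have "\<dots> = (\<Sum>i\<in>UNIV. pmf P i ^ 2)^2"
    by (simp add: power2_eq_square sum_product)
  finally show ?thesis .
qed

lemma ee_sym: "ee k l x = ee l k x" by (auto simp: ee_def)

lemma ee_sq: "ee k l x * ee k l x = ee k l x" by (auto simp: ee_def)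

lemma term_bound:
  fixes P :: "'a::finite pmf"
  assumes "k \<noteq> l" "k \<noteq> l'" "k' \<noteq> l" "k' \<noteq> l'" "k < m" "l < m" "k' < m" "l' < m"
  defines "s \<equiv> (\<Sum>i\<in>UNIV. pmf P i ^ 2)" and "c \<equiv> (\<Sum>i\<in>UNIV. pmf P i ^ 3)"
  shows "measure_pmf.expectation (iid_sample m P) (\<lambda>x. (ee k l x - s) * (ee k' l' x - s))
     \<le> (if l' = l then (if k' = k then s else 0) else 0) + (if k' = k then c else 0) + (if l' = l then c else 0)"
proof -
  have s0: "s \<ge> 0" "c \<ge> 0" unfolding s_def c_def by (auto intro!: sum_nonneg)
  have eq: "(\<lambda>x. (ee k l x - s) * (ee k' l' x - s)) = (\<lambda>x. ee k l x * ee k' l' x - s * ee k l x - s * ee k' l' x + s * s)"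
    by (auto simp: algebra_simps)
  have E: "measure_pmf.expectation (iid_sample m P) (\<lambda>x. (ee k l x - s) * (ee k' l' x - s))
     = measure_pmf.expectation (iid_sample m P) (\<lambda>x. ee k l x * ee k' l' x) - s * s"
    unfolding eq using assms by (simp add: int_iid Eee s_def)
  consider "k' = k" "l' = l" | "k' = k" "l' \<noteq> l" | "k' \<noteq> k" "l' = l" | "k' \<noteq> k" "l' \<noteq> l" by blast
  then show ?thesis
  proof cases
    case 1
    have "measure_pmf.expectation (iid_sample m P) (\<lambda>x. ee k l x * ee k' l' x) = s"
      using 1 assms by (simp add: ee_sq Eee s_def)
    moreover have "s * s \<ge> 0" using s0 by simp
    ultimately show ?thesis using E s0 1 by simp (smt (verit) mult_nonneg_nonneg s0)
  next
    case 2
    then show ?thesis using E s0 assms Eee3[of k l l' m P] by (simp add: c_def)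
  next
    case 3
    have "measure_pmf.expectation (iid_sample m P) (\<lambda>x. ee k l x * ee k' l' x) = c"
      using 3 assms Eee3[of l k k' m P] by (simp add: c_def ee_sym)
    then show ?thesis using 3 E s0 by simp
  next
    case 4
    have "measure_pmf.expectation (iid_sample m P) (\<lambda>x. ee k l x * ee k' l' x) = s^2"
      using 4 assms Eee4[of k l k' l' m P] by (simp add: s_def)
    then show ?thesis using 4 E s0 by (simp add: power2_eq_square)
  qed
qed

lemma card_sum: "finite S \<Longrightarrow> real (card {k \<in> S. x k = i}) = (\<Sum>k\<in>S. if x k = i then 1 else 0)"
  by (simp add: sum.inter_filter[symmetric])

lemma pt2': "(\<Sum>i\<in>UNIV. (if x k = i then 1 else 0) * (if x l = i then 1 else 0)) = ee k l (x :: nat \<Rightarrow> 'a::finite)"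
proof -
  have "(\<Sum>i\<in>UNIV. (if x k = i then 1 else 0) * (if x l = i then 1 else (0::real))) = (\<Sum>i\<in>UNIV. if i = x k then (if x l = x k then 1 else 0) else 0)"
    by (intro sum.cong) auto
  also have "\<dots> = ee k l x" by (simp add: ee_def)
  finally show ?thesis .
qed

lemma step1:
  fixes x :: "nat \<Rightarrow> 'a::finite"
  assumes "Q > 0"
  shows "(\<Sum>i\<in>UNIV. empirical x {..<Q} i * empirical x {Q..<2*Q} i)
     = (\<Sum>k<Q. \<Sum>l\<in>{Q..<2*Q}. ee k l x) / real Q ^ 2"
proof -
  have "(\<Sum>i\<in>UNIV. empirical x {..<Q} i * empirical x {Q..<2*Q} i)
     = (\<Sum>i\<in>UNIV. (\<Sum>k<Q. if x k = i then 1 else 0) * (\<Sum>l\<in>{Q..<2*Q}. if x l = i then 1 else 0)) / real Q ^ 2"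
    unfolding empirical_def card_sum[OF finite_lessThan] card_sum[OF finite_atLeastLessThan]
    by (subst sum_divide_distrib) (auto intro!: sum.cong simp: power2_eq_square)
  also have "\<dots> = (\<Sum>k<Q. \<Sum>l\<in>{Q..<2*Q}. \<Sum>i\<in>UNIV. (if x k = i then 1 else 0) * (if x l = i then 1 else 0)) / real Q ^ 2"
    by (simp add: sum_product sum.swap[of _ UNIV])
  also have "\<dots> = (\<Sum>k<Q. \<Sum>l\<in>{Q..<2*Q}. ee k l x) / real Q ^ 2"
    by (simp only: pt2')
  finally show ?thesis .
qed

lemma step4:
  fixes P :: "'a::finite pmf"
  defines "s \<equiv> (\<Sum>i\<in>UNIV. pmf P i ^ 2)" and "c \<equiv> (\<Sum>i\<in>UNIV. pmf P i ^ 3)"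
  shows "measure_pmf.expectation (iid_sample (2*Q) P) (\<lambda>x. (\<Sum>k<Q. \<Sum>l\<in>{Q..<2*Q}. ee k l x - s) ^ 2)
     \<le> real Q ^ 2 * s + 2 * real Q ^ 3 * c"
proof -
  have "measure_pmf.expectation (iid_sample (2*Q) P) (\<lambda>x. (\<Sum>k<Q. \<Sum>l\<in>{Q..<2*Q}. ee k l x - s) ^ 2)
    = measure_pmf.expectation (iid_sample (2*Q) P) (\<lambda>x. \<Sum>k<Q. \<Sum>l\<in>{Q..<2*Q}. \<Sum>k'<Q. \<Sum>l'\<in>{Q..<2*Q}. (ee k l x - s) * (ee k' l' x - s))"
    by (intro arg_cong[where f = "measure_pmf.expectation _"] ext, simp only: power2_eq_square sum_distrib_right, simp only: sum_distrib_left)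
  also have "\<dots> = (\<Sum>k<Q. \<Sum>l\<in>{Q..<2*Q}. \<Sum>k'<Q. \<Sum>l'\<in>{Q..<2*Q}. measure_pmf.expectation (iid_sample (2*Q) P) (\<lambda>x. (ee k l x - s) * (ee k' l' x - s)))"
    by (simp add: Bochner_Integration.integral_sum int_iid)
  also have "\<dots> \<le> (\<Sum>k<Q. \<Sum>l\<in>{Q..<2*Q}. \<Sum>k'<Q. \<Sum>l'\<in>{Q..<2*Q}.
      (if l' = l then (if k' = k then s else 0) else 0) + (if k' = k then c else 0) + (if l' = l then c else 0))"
    unfolding s_def c_def by (intro sum_mono term_bound) auto
  also have "\<dots> = real Q ^ 2 * s + 2 * real Q ^ 3 * c"
    by (simp add: sum.distrib if_distrib[where f="\<lambda>x. real Q * x"] power2_eq_square power3_eq_cube algebra_simps)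
  finally show ?thesis .
qed

theorem lemma1:
  fixes P :: "'a::finite pmf" and \<rho> :: real and Q :: nat
  assumes "\<rho> > 0"
    and "sqrt (\<Sum>i\<in>UNIV. (pmf P i)^2) \<le> sqrt 2 * \<rho>"
    and "Q > 0"
    and "3 * (2 powr (7/4) * real Q powr (-1/2) * \<rho> powr (3/2) + 2 * (1 / real Q) * \<rho>) \<le> \<rho>^2 / 3"
  shows "measure_pmf.prob (iid_sample (2*Q) P)
           {x. \<bar>(\<Sum>i\<in>UNIV. empirical x {..<Q} i * empirical x {Q..<2*Q} i)
                 - (\<Sum>i\<in>UNIV. (pmf P i)^2)\<bar> > \<rho>^2 / 3} \<le> 1/3"
proof -
  define s where "s = (\<Sum>i\<in>UNIV. pmf P i ^ 2)"
  define c where "c = (\<Sum>i\<in>UNIV. pmf P i ^ 3)"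
  define F where "F x = (\<Sum>k<Q. \<Sum>l\<in>{Q..<2*Q}. ee k l x - s)" for x :: "nat \<Rightarrow> 'a"
  define M where "M = iid_sample (2*Q) P"
  define a where "a = real Q ^ 2 * \<rho> ^ 2 / 3"
  have Q0: "real Q > 0" using assms(3) by simp
  have a0: "a > 0" unfolding a_def using Q0 assms(1) by simp
  have s0: "s \<ge> 0" "c \<ge> 0" unfolding s_def c_def by (auto intro!: sum_nonneg)
  have Fx: "(\<Sum>i\<in>UNIV. empirical x {..<Q} i * empirical x {Q..<2*Q} i) - s = F x / real Q ^ 2" for x :: "nat \<Rightarrow> 'a"
  proof -
    have "(\<Sum>k<Q. \<Sum>l\<in>{Q..<2*Q}. ee k l x) = F x + real Q ^ 2 * s"
      unfolding F_def by (simp add: sum_subtractf power2_eq_square)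
    then show ?thesis using step1[OF assms(3), of x] Q0 by (simp add: field_simps)
  qed
  have sub: "{x :: nat \<Rightarrow> 'a. \<bar>(\<Sum>i\<in>UNIV. empirical x {..<Q} i * empirical x {Q..<2*Q} i)
                 - (\<Sum>i\<in>UNIV. (pmf P i)^2)\<bar> > \<rho>^2 / 3} \<subseteq> {x \<in> space (measure_pmf M). \<bar>F x\<bar> \<ge> a}"
  proof
    fix x :: "nat \<Rightarrow> 'a" assume "x \<in> {x :: nat \<Rightarrow> 'a. \<bar>(\<Sum>i\<in>UNIV. empirical x {..<Q} i * empirical x {Q..<2*Q} i)
                 - (\<Sum>i\<in>UNIV. (pmf P i)^2)\<bar> > \<rho>^2 / 3}"
    then have "\<bar>F x / real Q ^ 2\<bar> > \<rho>^2 / 3" using Fx[of x] by (simp add: s_def)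
    then have "\<bar>F x\<bar> / real Q ^ 2 > \<rho>^2 / 3" by simp
    then have "\<bar>F x\<bar> > \<rho>^2 / 3 * real Q ^ 2" using Q0 by (simp add: field_simps)
    then show "x \<in> {x \<in> space (measure_pmf M). \<bar>F x\<bar> \<ge> a}" unfolding a_def by (simp add: mult.commute)
  qed
  have "measure_pmf.prob M {x :: nat \<Rightarrow> 'a. \<bar>(\<Sum>i\<in>UNIV. empirical x {..<Q} i * empirical x {Q..<2*Q} i)
                 - (\<Sum>i\<in>UNIV. (pmf P i)^2)\<bar> > \<rho>^2 / 3} \<le> measure_pmf.prob M {x \<in> space (measure_pmf M). \<bar>F x\<bar> \<ge> a}"
    by (rule measure_pmf.finite_measure_mono[OF sub]) simp
  also have "\<dots> \<le> measure_pmf.expectation M (\<lambda>x. F x ^ 2) / a\<^sup>2"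
    by (rule measure_pmf.second_moment_method) (auto simp: M_def int_iid a0)
  also have "\<dots> \<le> (real Q ^ 2 * s + 2 * real Q ^ 3 * c) / a\<^sup>2"
    using step4[where P=P and Q=Q] a0 unfolding M_def F_def s_def c_def by (intro divide_right_mono) auto
  also have "\<dots> \<le> 1/3"
  proof -
    have s2: "s \<le> 2 * \<rho>^2"
    proof -
      have "s = (sqrt s)^2" using s0 by simp
      also have "\<dots> \<le> (sqrt 2 * \<rho>)^2" using assms(2) unfolding s_def[symmetric]
        using s0 by (intro power_mono) auto
      finally show ?thesis by (simp add: power_mult_distrib)
    qed
    have c2: "c \<le> sqrt 2 * \<rho> * s"
    proof -
      have "pmf P i ^ 3 \<le> sqrt 2 * \<rho> * pmf P i ^ 2" for i
      proof -
        have "pmf P i ^ 2 \<le> s" unfolding s_def by (rule member_le_sum) auto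
        then have "pmf P i \<le> sqrt s" by (simp add: real_le_rsqrt)
        then have "pmf P i \<le> sqrt 2 * \<rho>" using assms(2) s_def by simp
        then have "pmf P i * pmf P i ^ 2 \<le> sqrt 2 * \<rho> * pmf P i ^ 2" by (intro mult_right_mono) auto
        then show ?thesis by (simp add: power2_eq_square power3_eq_cube)
      qed
      then show ?thesis unfolding c_def s_def sum_distrib_left by (intro sum_mono)
    qed
    have u: "real Q * \<rho> \<ge> 324"
    proof -
      have p1: "real Q powr (-1/2) = 1 / sqrt (real Q)" using Q0
        by (simp add: powr_minus_divide powr_half_sqrt)
      have p2: "\<rho> powr (3/2) = \<rho> * sqrt \<rho>"
      proof -
        have "\<rho> powr (3/2) = \<rho> powr (1 + 1/2)" by simp
        also have "\<dots> = \<rho> * \<rho> powr (1/2)" using assms(1) by (subst powr_add) simp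
        finally show ?thesis using assms(1) by (simp add: powr_half_sqrt)
      qed
      have p3: "2 powr (7/4) \<ge> (2::real)"
        using powr_mono[of 1 "7/4" "2::real"] by simp
      have "3 * (2 * (1 / sqrt (real Q)) * (\<rho> * sqrt \<rho>)) \<le> \<rho>^2 / 3"
      proof -
        have "3 * (2 * (1 / sqrt (real Q)) * (\<rho> * sqrt \<rho>)) \<le> 3 * (2 powr (7/4) * real Q powr (-1/2) * \<rho> powr (3/2))"
          unfolding p1 p2 using p3 assms(1) Q0 by (intro mult_left_mono mult_right_mono) auto
        also have "\<dots> \<le> \<rho>^2 / 3" using assms(4) assms(1) Q0 by (smt (verit) divide_pos_pos mult_pos_pos)
        finally show ?thesis .
      qed
      then have "18 * sqrt \<rho> \<le> \<rho> * sqrt (real Q)" using Q0 assms(1)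
        by (simp add: field_simps power2_eq_square)
      moreover have "\<rho> = sqrt \<rho> * sqrt \<rho>" using assms(1) by simp
      ultimately have "sqrt \<rho> * 18 \<le> sqrt \<rho> * (sqrt \<rho> * sqrt (real Q))"
        by (metis mult.assoc mult.commute)
      moreover have "sqrt \<rho> > 0" using assms(1) by simp
      ultimately have "18 \<le> sqrt \<rho> * sqrt (real Q)" by (simp only: mult_le_cancel_left_pos)
      then have "18^2 \<le> (sqrt \<rho> * sqrt (real Q))^2" by (intro power_mono) auto
      then show ?thesis using assms(1) Q0 by (simp add: power_mult_distrib mult.commute)
    qed
    have sq2: "sqrt 2 \<le> (3/2::real)" by (rule real_le_lsqrt) (auto simp: power2_eq_square)
    define u where "u = real Q * \<rho>"
    have "real Q ^ 2 * s + 2 * real Q ^ 3 * c \<le> real Q ^ 2 * (2 * \<rho>^2) + 2 * real Q ^ 3 * (3/2 * \<rho> * (2 * \<rho>^2))"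
    proof (intro add_mono mult_left_mono)
      show "c \<le> 3/2 * \<rho> * (2 * \<rho>^2)"
      proof -
        have "sqrt 2 * \<rho> * s \<le> 3/2 * \<rho> * s"
          using sq2 s0 assms(1) by (intro mult_right_mono) auto
        moreover have "3/2 * \<rho> * s \<le> 3/2 * \<rho> * (2 * \<rho>^2)"
          using s2 assms(1) by (intro mult_left_mono) auto
        ultimately show ?thesis using c2 by linarith
      qed
    qed (use s2 in auto)
    also have "\<dots> = 2 * u^2 + 6 * u^3" unfolding u_def by (simp add: power2_eq_square power3_eq_cube)
    also have "\<dots> \<le> 1/3 * a^2"
    proof -
      have aeq: "a = u^2 / 3" unfolding a_def u_def by (simp add: power_mult_distrib)
      have ineq: "2 * u^2 + 6 * u^3 \<le> u^4 / 27"
      proof -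
        have uu: "u \<ge> 324" using u unfolding u_def .
        then have "u * u \<ge> 324 * u" by (intro mult_right_mono) auto
        then have "u^2 / 27 \<ge> 12 * u" by (simp add: power2_eq_square)
        then have "2 + 6 * u \<le> u^2 / 27" using uu by linarith
        then have "u^2 * (2 + 6 * u) \<le> u^2 * (u^2/27)" by (intro mult_left_mono) auto
        then show ?thesis by (simp add: algebra_simps power2_eq_square power3_eq_cube power4_eq_xxxx)
      qed
      have eq2: "1/3 * (u^2/3)^2 = u^4 / 27" by (simp add: power_divide flip: power_mult)
      show ?thesis unfolding aeq using ineq eq2 by linarith
    qed
    finally show ?thesis using a0 by (simp add: field_simps)
  qed
  finally show ?thesis unfolding M_def .
qed

end
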